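(* Let $\Omega$ be a finite set and let $p,q$ be probability distributions on $\Omega$. Let $X_1,X_2$ be drawn i.i.d. from $p$ and $\mathcal{S}=\{X_1,X_2\}$, and let $P^\star(\mathrm{acc})$ be the supremum of $\Pr(Z\in\mathcal{S})$ over all valid token-level selection rules with output $Z$. Then $P^\star(\mathrm{acc})=1$ if and only if $$\sum_{x\in\mathcal{A}}q(x)\ \ge\ \Big(\sum_{x\in\mathcal{A}}p(x)\Big)^2\qquad\text{for every subset }\mathcal{A}\subseteq\Omega.$$
   Context: A token-level selection rule is a conditional distribution $\mathcal{P}(\cdot\mid X_1,X_2)$ on $\Omega$; it is valid if its output $Z$ satisfies $\Pr(Z=z)=q(z)$ for all $z\in\Omega$, where $X_1,X_2$ are i.i.d. with law $p$. *)

theory Defs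
  imports "HOL-Probability.Probability"
begin

text \<open>A token-level selection rule is a Markov kernel K x1 x2 (a distribution on Omega
given the two draws). Joint law of (X1, X2, Z) with X1, X2 iid p.\<close>

definition joint_law :: "'a pmf \<Rightarrow> ('a \<Rightarrow> 'a \<Rightarrow> 'a pmf) \<Rightarrow> ('a \<times> 'a \<times> 'a) pmf" where
  "joint_law p K = bind_pmf p (\<lambda>x1. bind_pmf p (\<lambda>x2. map_pmf (\<lambda>z. (x1, x2, z)) (K x1 x2)))"

definition valid_rule :: "'a pmf \<Rightarrow> 'a pmf \<Rightarrow> ('a \<Rightarrow> 'a \<Rightarrow> 'a pmf) \<Rightarrow> bool" where
  "valid_rule p q K \<longleftrightarrow> map_pmf (\<lambda>(x1, x2, z). z) (joint_law p K) = q"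

definition acc_prob :: "'a pmf \<Rightarrow> ('a \<Rightarrow> 'a \<Rightarrow> 'a pmf) \<Rightarrow> real" where
  "acc_prob p K = measure_pmf.prob (joint_law p K) {(x1, x2, z). z \<in> {x1, x2}}"

definition P_star :: "'a pmf \<Rightarrow> 'a pmf \<Rightarrow> real" where
  "P_star p q = Sup {acc_prob p K | K. valid_rule p q K}"

end

theory Submission
  imports Defs
begin


lemma marg_pair: "map_pmf (\<lambda>(x1, x2, z). (x1, x2)) (joint_law p K) = pair_pmf p p"
  unfolding joint_law_def pair_pmf_def
  by (simp add: map_bind_pmf pmf.map_comp o_def)

lemma upper:
  fixes p q :: "'a::finite pmf"
  assumes v: "valid_rule p q K"
  shows "acc_prob p K \<le> 1 - (measure_pmf.prob p A)^2 + measure_pmf.prob q A"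
proof -
  let ?J = "joint_law p K"
  let ?E1 = "{t::'a\<times>'a\<times>'a. snd (snd t) \<in> A}"
  let ?E3 = "{t::'a\<times>'a\<times>'a. fst t \<in> A \<and> fst (snd t) \<in> A}"
  have sub: "{(x1, x2, z). z \<in> {x1, x2}} \<subseteq> ?E1 \<union> (UNIV - ?E3)" by auto
  have "acc_prob p K \<le> measure_pmf.prob ?J (?E1 \<union> (UNIV - ?E3))"
    unfolding acc_prob_def using sub by (intro measure_pmf.finite_measure_mono) auto
  also have "\<dots> \<le> measure_pmf.prob ?J ?E1 + measure_pmf.prob ?J (UNIV - ?E3)"
    by (rule measure_Un_le) auto
  also have "measure_pmf.prob ?J ?E1 = measure_pmf.prob q A"
  proof -
    have "measure_pmf.prob q A = measure_pmf.prob (map_pmf (\<lambda>(x1, x2, z). z) ?J) A"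
      using v unfolding valid_rule_def by simp
    also have "\<dots> = measure_pmf.prob ?J ?E1"
      by (simp add: vimage_def case_prod_beta)
    finally show ?thesis by simp
  qed
  also have "measure_pmf.prob ?J (UNIV - ?E3) = 1 - measure_pmf.prob ?J ?E3"
    using measure_pmf.prob_compl[of "?E3" "?J"] by (simp add: Compl_eq_Diff_UNIV)
  also have "measure_pmf.prob ?J ?E3 = (measure_pmf.prob p A)^2"
  proof -
    have "measure_pmf.prob ?J ?E3 = measure_pmf.prob (map_pmf (\<lambda>(x1, x2, z). (x1, x2)) ?J) (A \<times> A)"
      by (simp add: vimage_def case_prod_beta)
    also have "\<dots> = (measure_pmf.prob p A)^2"
      unfolding marg_pair by (subst measure_pmf_prob_product) (auto simp: power2_eq_square)
    finally show ?thesis .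
  qed
  finally show ?thesis by simp
qed



definition KK :: "('a \<Rightarrow> 'a \<Rightarrow> real) \<Rightarrow> 'a \<Rightarrow> 'a \<Rightarrow> 'a pmf" where
  "KK g x1 x2 = map_pmf (\<lambda>b. if b then x1 else x2) (bernoulli_pmf (g x1 x2))"

definition rr :: "'a::finite pmf \<Rightarrow> ('a \<Rightarrow> 'a \<Rightarrow> real) \<Rightarrow> 'a \<Rightarrow> real" where
  "rr p g z = (\<Sum>y\<in>UNIV. pmf p z * pmf p y * g z y) + (\<Sum>x\<in>UNIV. pmf p x * pmf p z * (1 - g x z))"

lemma acc_KK: "acc_prob p (KK g) = 1"
  unfolding acc_prob_def
  by (subst measure_pmf.prob_eq_1)
     (auto simp: AE_measure_pmf_iff joint_law_def KK_def)

lemma int_fin: "(\<integral>x. f x \<partial>measure_pmf (M::'a::finite pmf)) = (\<Sum>a\<in>UNIV. f a * pmf M a)"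
  by (rule integral_measure_pmf_real) auto

lemma pmf_KK:
  assumes "0 \<le> g x1 x2" "g x1 x2 \<le> 1"
  shows "pmf (KK g x1 x2) z = (if z = x1 then g x1 x2 else 0) + (if z = x2 then 1 - g x1 x2 else 0)"
proof -
  have "pmf (KK g x1 x2) z = measure_pmf.prob (bernoulli_pmf (g x1 x2)) ((\<lambda>b. if b then x1 else x2) -` {z})"
    unfolding KK_def pmf_map ..
  also have "\<dots> = (\<Sum>b\<in>((\<lambda>b. if b then x1 else x2) -` {z}). pmf (bernoulli_pmf (g x1 x2)) b)"
    by (rule measure_measure_pmf_finite) auto
  also have "\<dots> = (if z = x1 then g x1 x2 else 0) + (if z = x2 then 1 - g x1 x2 else 0)"
  proof (cases "z = x1"; cases "z = x2")
    assume "z = x1" "z = x2"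
    then have "((\<lambda>b. if b then x1 else x2) -` {z}) = {True, False}" by auto
    then show ?thesis using assms \<open>z = x1\<close> \<open>z = x2\<close> by simp
  next
    assume "z = x1" "z \<noteq> x2"
    then have "((\<lambda>b. if b then x1 else x2) -` {z}) = {True}" by (auto split: if_splits)
    then show ?thesis using assms \<open>z = x1\<close> \<open>z \<noteq> x2\<close> by simp
  next
    assume "z \<noteq> x1" "z = x2"
    then have "((\<lambda>b. if b then x1 else x2) -` {z}) = {False}" by (auto split: if_splits)
    then show ?thesis using assms \<open>z \<noteq> x1\<close> \<open>z = x2\<close> by simp
  next
    assume "z \<noteq> x1" "z \<noteq> x2"
    then have "((\<lambda>b. if b then x1 else x2) -` {z}) = {}" by (auto split: if_splits)
    then show ?thesis using assms \<open>z \<noteq> x1\<close> \<open>z \<noteq> x2\<close> by simp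
  qed
  finally show ?thesis .
qed

lemma out_KK:
  fixes p :: "'a::finite pmf"
  assumes g: "\<And>x y. 0 \<le> g x y \<and> g x y \<le> 1"
  shows "pmf (map_pmf (\<lambda>(x1, x2, z). z) (joint_law p (KK g))) z = rr p g z"
proof -
  have m: "map_pmf (\<lambda>(x1, x2, z). z) (joint_law p (KK g)) = bind_pmf p (\<lambda>x1. bind_pmf p (\<lambda>x2. KK g x1 x2))"
    unfolding joint_law_def by (simp add: map_bind_pmf pmf.map_comp o_def)
  have "pmf (bind_pmf p (\<lambda>x1. bind_pmf p (\<lambda>x2. KK g x1 x2))) z
     = (\<Sum>x1\<in>UNIV. (\<Sum>x2\<in>UNIV. ((if z = x1 then g x1 x2 else 0) + (if z = x2 then 1 - g x1 x2 else 0)) * pmf p x2) * pmf p x1)"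
    using g by (simp add: pmf_bind int_fin pmf_KK)
  also have "\<dots> = (\<Sum>x1\<in>UNIV. (\<Sum>x2\<in>UNIV. (if z = x1 then pmf p x1 * pmf p x2 * g x1 x2 else 0)))
      + (\<Sum>x1\<in>UNIV. (\<Sum>x2\<in>UNIV. (if z = x2 then pmf p x1 * pmf p x2 * (1 - g x1 x2) else 0)))"
    unfolding sum.distrib[symmetric] sum_distrib_right by (intro sum.cong refl) (auto simp: algebra_simps)
  also have "\<dots> = rr p g z"
    unfolding rr_def by (simp add: sum.delta sum.swap[where A=UNIV and B=UNIV] cong: if_cong)
  finally show ?thesis using m by simp
qed



lemma rr_pert:
  fixes p :: "'a::finite pmf"
  shows "rr p (\<lambda>a b. g a b - (if a = s \<and> b = t then e else 0)) w
       = rr p g w - (if w = s then pmf p s * pmf p t * e else 0) + (if w = t then pmf p s * pmf p t * e else 0)"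
proof -
  have 1: "(\<Sum>y\<in>UNIV. pmf p w * pmf p y * (g w y - (if w = s \<and> y = t then e else 0)))
     = (\<Sum>y\<in>UNIV. pmf p w * pmf p y * g w y) - (\<Sum>y\<in>UNIV. (if w = s \<and> y = t then pmf p w * pmf p y * e else 0))"
    by (simp add: right_diff_distrib sum_subtractf) (intro sum.cong; auto)
  have 2: "(\<Sum>y\<in>UNIV. (if w = s \<and> y = t then pmf p w * pmf p y * e else 0)) = (if w = s then pmf p s * pmf p t * e else 0)"
    by (cases "w = s") (simp_all add: sum.delta')
  have 3: "(\<Sum>x\<in>UNIV. pmf p x * pmf p w * (1 - (g x w - (if x = s \<and> w = t then e else 0))))
     = (\<Sum>x\<in>UNIV. pmf p x * pmf p w * (1 - g x w)) + (\<Sum>x\<in>UNIV. (if x = s \<and> w = t then pmf p x * pmf p w * e else 0))"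
    by (simp add: algebra_simps sum.distrib[symmetric] sum_subtractf[symmetric] cong: if_cong) (intro sum.cong; auto)
  have 4: "(\<Sum>x\<in>UNIV. (if x = s \<and> w = t then pmf p x * pmf p w * e else 0)) = (if w = t then pmf p s * pmf p t * e else 0)"
    by (cases "w = t") (simp_all add: sum.delta')
  show ?thesis unfolding rr_def using 1 2 3 4 by simp
qed

definition Phi :: "'a::finite pmf \<Rightarrow> 'a pmf \<Rightarrow> ('a \<Rightarrow> 'a \<Rightarrow> real) \<Rightarrow> real" where
  "Phi p q g = (\<Sum>w\<in>UNIV. (rr p g w - pmf q w)^2)"

lemma Phi_pert:
  fixes p q :: "'a::finite pmf" and g :: "'a \<Rightarrow> 'a \<Rightarrow> real" and e :: real and s t :: 'a
  assumes "s \<noteq> t"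
  defines "d \<equiv> (\<lambda>w. rr p g w - pmf q w)"
  defines "\<delta> \<equiv> pmf p s * pmf p t * e"
  shows "Phi p q (\<lambda>a b. g a b - (if a = s \<and> b = t then e else 0))
     = Phi p q g + 2 * \<delta> * (d t - d s) + 2 * \<delta>^2"
proof -
  let ?a = "\<lambda>w. (if w = s then \<delta> else 0)"
  let ?b = "\<lambda>w. (if w = t then \<delta> else 0)"
  have "Phi p q (\<lambda>a b. g a b - (if a = s \<and> b = t then e else 0)) = (\<Sum>w\<in>UNIV. (d w - ?a w + ?b w)^2)"
    unfolding Phi_def rr_pert d_def \<delta>_def by (intro sum.cong refl) (auto simp: algebra_simps)
  also have "\<dots> = (\<Sum>w\<in>UNIV. (d w)^2 + (2 * (d w * ?b w) - 2 * (d w * ?a w)) + ((?a w)^2 + (?b w)^2))"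
    using assms(1) by (intro sum.cong refl) (auto simp: power2_eq_square algebra_simps)
  also have "\<dots> = (\<Sum>w\<in>UNIV. (d w)^2) + (2 * (\<Sum>w\<in>UNIV. d w * ?b w) - 2 * (\<Sum>w\<in>UNIV. d w * ?a w))
      + ((\<Sum>w\<in>UNIV. (?a w)^2) + (\<Sum>w\<in>UNIV. (?b w)^2))"
    by (simp add: sum.distrib sum_subtractf sum_distrib_left)
  also have "(\<Sum>w\<in>UNIV. d w * ?b w) = d t * \<delta>"
    by (simp add: if_distrib cong: if_cong)
  also have "(\<Sum>w\<in>UNIV. d w * ?a w) = d s * \<delta>"
    by (simp add: if_distrib cong: if_cong)
  also have "(\<Sum>w\<in>UNIV. (?a w)^2) = (\<Sum>w\<in>UNIV. if w = s then \<delta>^2 else 0)"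
    by (intro sum.cong refl) auto
  also have "\<dots> = \<delta>^2" by simp
  also have "(\<Sum>w\<in>UNIV. (?b w)^2) = (\<Sum>w\<in>UNIV. if w = t then \<delta>^2 else 0)"
    by (intro sum.cong refl) auto
  also have "\<dots> = \<delta>^2" by simp
  also have "(\<Sum>w\<in>UNIV. (d w)^2) = Phi p q g"
    unfolding Phi_def d_def ..
  finally show ?thesis by (simp add: algebra_simps)
qed



lemma step1:
  fixes p q :: "'a::finite pmf" and g :: "'a \<Rightarrow> 'a \<Rightarrow> real"
  assumes bnd: "\<forall>x y. 0 \<le> g x y \<and> g x y \<le> 1"
    and mn: "\<forall>g'. (\<forall>x y. 0 \<le> g' x y \<and> g' x y \<le> 1) \<longrightarrow> Phi p q g \<le> Phi p q g'"
    and st: "s \<noteq> t" and c0: "pmf p s * pmf p t > 0" and g0: "g s t > 0"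
  shows "rr p g s - pmf q s \<le> rr p g t - pmf q t"
proof (rule ccontr)
  define d where "d = (\<lambda>w. rr p g w - pmf q w)"
  assume "\<not> ?thesis"
  then have gap: "d s - d t > 0" unfolding d_def by simp
  define c where "c = pmf p s * pmf p t"
  have c: "c > 0" using c0 c_def by simp
  define \<epsilon> where "\<epsilon> = min (g s t) ((d s - d t) / (2 * c))"
  have e0: "\<epsilon> > 0" using g0 gap c by (simp add: \<epsilon>_def)
  have e1: "\<epsilon> \<le> g s t" by (simp add: \<epsilon>_def)
  have "c * \<epsilon> \<le> c * ((d s - d t) / (2 * c))" using c by (intro mult_left_mono) (auto simp: \<epsilon>_def)
  also have "\<dots> = (d s - d t) / 2" using c by (simp add: field_simps)
  finally have e2: "c * \<epsilon> \<le> (d s - d t) / 2" .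
  define g' where "g' = (\<lambda>a b. g a b - (if a = s \<and> b = t then \<epsilon> else 0))"
  have "\<forall>x y. 0 \<le> g' x y \<and> g' x y \<le> 1" using bnd e0 e1 by (auto simp: g'_def) (insert bnd[rule_format, of s t] e0 e1, linarith)+
  then have le: "Phi p q g \<le> Phi p q g'" using mn by blast
  have eq: "Phi p q g' = Phi p q g + 2 * (c * \<epsilon>) * (d t - d s) + 2 * (c * \<epsilon>)^2"
    unfolding g'_def c_def d_def by (rule Phi_pert[OF st])
  have "2 * (c * \<epsilon>) * (d t - d s) + 2 * (c * \<epsilon>)^2 = 2 * (c * \<epsilon>) * (c * \<epsilon> - (d s - d t))"
    by (simp add: algebra_simps power2_eq_square)
  moreover have "c * \<epsilon> - (d s - d t) < 0" using e2 gap by (simp add: field_simps)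
  moreover have "c * \<epsilon> > 0" using c e0 by simp
  ultimately have "2 * (c * \<epsilon>) * (d t - d s) + 2 * (c * \<epsilon>)^2 < 0"
    by (simp add: mult_pos_neg)
  then show False using le eq by linarith
qed

lemma step2:
  fixes p q :: "'a::finite pmf" and g :: "'a \<Rightarrow> 'a \<Rightarrow> real"
  assumes bnd: "\<forall>x y. 0 \<le> g x y \<and> g x y \<le> 1"
    and mn: "\<forall>g'. (\<forall>x y. 0 \<le> g' x y \<and> g' x y \<le> 1) \<longrightarrow> Phi p q g \<le> Phi p q g'"
    and st: "s \<noteq> t" and c0: "pmf p s * pmf p t > 0" and g0: "g s t < 1"
  shows "rr p g t - pmf q t \<le> rr p g s - pmf q s"
proof (rule ccontr)
  define d where "d = (\<lambda>w. rr p g w - pmf q w)"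
  assume "\<not> ?thesis"
  then have gap: "d t - d s > 0" unfolding d_def by simp
  define c where "c = pmf p s * pmf p t"
  have c: "c > 0" using c0 c_def by simp
  define \<epsilon> where "\<epsilon> = min (1 - g s t) ((d t - d s) / (2 * c))"
  have e0: "\<epsilon> > 0" using g0 gap c by (simp add: \<epsilon>_def)
  have e1: "\<epsilon> \<le> 1 - g s t" by (simp add: \<epsilon>_def)
  have "c * \<epsilon> \<le> c * ((d t - d s) / (2 * c))" using c by (intro mult_left_mono) (auto simp: \<epsilon>_def)
  also have "\<dots> = (d t - d s) / 2" using c by (simp add: field_simps)
  finally have e2: "c * \<epsilon> \<le> (d t - d s) / 2" .
  define g' where "g' = (\<lambda>a b. g a b - (if a = s \<and> b = t then - \<epsilon> else 0))"
  have "\<forall>x y. 0 \<le> g' x y \<and> g' x y \<le> 1" using bnd e0 e1 by (auto simp: g'_def) (insert bnd[rule_format, of s t] e0 e1, linarith)+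
  then have le: "Phi p q g \<le> Phi p q g'" using mn by blast
  have eq: "Phi p q g' = Phi p q g + 2 * (c * - \<epsilon>) * (d t - d s) + 2 * (c * - \<epsilon>)^2"
    unfolding g'_def c_def d_def by (rule Phi_pert[OF st])
  have "2 * (c * - \<epsilon>) * (d t - d s) + 2 * (c * - \<epsilon>)^2 = 2 * (c * \<epsilon>) * (c * \<epsilon> - (d t - d s))"
    by (simp add: algebra_simps power2_eq_square)
  moreover have "c * \<epsilon> - (d t - d s) < 0" using e2 gap by (simp add: field_simps)
  moreover have "c * \<epsilon> > 0" using c e0 by simp
  ultimately have "2 * (c * - \<epsilon>) * (d t - d s) + 2 * (c * - \<epsilon>)^2 < 0"
    by (simp add: mult_pos_neg)
  then show False using le eq by linarith
qed



lemma exists_min: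
  fixes p q :: "'a::finite pmf"
  shows "\<exists>g. (\<forall>x y. 0 \<le> g x y \<and> g x y \<le> 1) \<and>
    (\<forall>g'. (\<forall>x y. 0 \<le> g' x y \<and> g' x y \<le> 1) \<longrightarrow> Phi p q g \<le> Phi p q g')"
proof -
  let ?S = "cbox (0::real^('a\<times>'a)) 1"
  let ?f = "\<lambda>u::real^('a\<times>'a). Phi p q (\<lambda>a b. u $ (a, b))"
  have "continuous_on ?S ?f"
    unfolding Phi_def rr_def by (intro continuous_intros)
  moreover have "(0::real^('a\<times>'a)) \<in> ?S" by (auto simp: mem_box_cart)
  then have "?S \<noteq> {}" by blast
  ultimately obtain v where v: "v \<in> ?S" "\<forall>u\<in>?S. ?f v \<le> ?f u"
    using continuous_attains_inf[of ?S ?f] by auto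
  show ?thesis
  proof (intro exI conjI allI impI)
    fix x y show "0 \<le> v $ (x, y)" "v $ (x, y) \<le> 1" using v(1) by (auto simp: mem_box_cart)
  next
    fix g' :: "'a \<Rightarrow> 'a \<Rightarrow> real"
    assume b: "\<forall>x y. 0 \<le> g' x y \<and> g' x y \<le> 1"
    let ?u = "\<chi> i. g' (fst i) (snd i)"
    have "?u \<in> ?S" using b by (auto simp: mem_box_cart)
    then have "?f v \<le> ?f ?u" using v(2) by blast
    then show "Phi p q (\<lambda>a b. v $ (a, b)) \<le> Phi p q g'" by simp
  qed
qed

lemma main_exists:
  fixes p q :: "'a::finite pmf"
  assumes cond: "\<forall>A :: 'a set. (measure_pmf.prob p A)^2 \<le> measure_pmf.prob q A"
  shows "\<exists>g. (\<forall>x y. 0 \<le> g x y \<and> g x y \<le> 1) \<and> (\<forall>w. rr p g w = pmf q w)"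
proof -
  obtain g where bnd: "\<forall>x y. 0 \<le> g x y \<and> g x y \<le> 1"
    and mn: "\<forall>g'. (\<forall>x y. 0 \<le> g' x y \<and> g' x y \<le> 1) \<longrightarrow> Phi p q g \<le> Phi p q g'"
    using exists_min[of p q] by blast
  define d where "d = (\<lambda>w. rr p g w - pmf q w)"
  define M where "M = Max (range d)"
  define R where "R = {w. d w = M}"
  have dM: "d w \<le> M" for w unfolding M_def by (rule Max_ge) auto
  have "M \<in> range d" unfolding M_def by (rule Max_in) auto
  then have Rne: "R \<noteq> {}" unfolding R_def by auto
  have cl1: "y \<in> R" if "z \<in> R" "pmf p z * pmf p y * g z y \<noteq> 0" for z y
  proof (cases "z = y")
    case False
    have "pmf p z * pmf p y > 0" using that(2) by (simp add: less_le)
    moreover have "g z y > 0" using that(2) bnd by (simp add: less_le)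
    ultimately have "d z \<le> d y" unfolding d_def using step1[OF bnd mn False] by blast
    then show ?thesis using dM[of y] that(1) unfolding R_def by auto
  qed (use that in auto)
  have cl2: "x \<in> R" if "z \<in> R" "pmf p x * pmf p z * (1 - g x z) \<noteq> 0" for z x
  proof (cases "x = z")
    case False
    have "pmf p x * pmf p z > 0" using that(2) by (simp add: less_le)
    moreover have "g x z < 1" using that(2) bnd by (simp add: less_le)
    ultimately have "d z \<le> d x" unfolding d_def using step2[OF bnd mn False] by blast
    then show ?thesis using dM[of x] that(1) unfolding R_def by auto
  qed (use that in auto)
  have s1: "(\<Sum>y\<in>UNIV. pmf p z * pmf p y * g z y) = (\<Sum>y\<in>R. pmf p z * pmf p y * g z y)" if "z \<in> R" for z
    by (rule sum.mono_neutral_right) (use cl1 that in auto)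
  have s2: "(\<Sum>x\<in>UNIV. pmf p x * pmf p z * (1 - g x z)) = (\<Sum>x\<in>R. pmf p x * pmf p z * (1 - g x z))" if "z \<in> R" for z
    by (rule sum.mono_neutral_right) (use cl2 that in auto)
  have "(\<Sum>z\<in>R. rr p g z) = (\<Sum>z\<in>R. \<Sum>y\<in>R. pmf p z * pmf p y * g z y) + (\<Sum>z\<in>R. \<Sum>x\<in>R. pmf p x * pmf p z * (1 - g x z))"
    unfolding rr_def sum.distrib using s1 s2 by simp
  also have "(\<Sum>z\<in>R. \<Sum>x\<in>R. pmf p x * pmf p z * (1 - g x z)) = (\<Sum>z\<in>R. \<Sum>y\<in>R. pmf p z * pmf p y * (1 - g z y))"
    by (rule sum.swap)
  also have "(\<Sum>z\<in>R. \<Sum>y\<in>R. pmf p z * pmf p y * g z y) + \<dots> = (\<Sum>z\<in>R. \<Sum>y\<in>R. pmf p z * pmf p y)"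
    unfolding sum.distrib[symmetric] by (intro sum.cong refl) (simp add: algebra_simps)
  also have "\<dots> = (\<Sum>z\<in>R. pmf p z)^2"
    by (simp add: power2_eq_square sum_product)
  also have "\<dots> = (measure_pmf.prob p R)^2" by (simp add: measure_measure_pmf_finite)
  also have "\<dots> \<le> measure_pmf.prob q R" using cond by blast
  also have "\<dots> = (\<Sum>z\<in>R. pmf q z)" by (simp add: measure_measure_pmf_finite)
  finally have "(\<Sum>z\<in>R. d z) \<le> 0" unfolding d_def by (simp add: sum_subtractf)
  moreover have "(\<Sum>z\<in>R. d z) = real (card R) * M" unfolding R_def by simp
  moreover have "card R > 0" using Rne by (simp add: card_gt_0_iff)
  ultimately have M0: "M \<le> 0"
    by (metis not_le mult_pos_pos of_nat_0_less_iff)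
  have "(\<Sum>w\<in>UNIV. rr p g w) = 1"
    using bnd by (simp add: out_KK[symmetric] sum_pmf_eq_1)
  moreover have "(\<Sum>w\<in>UNIV. pmf q w) = 1" by (simp add: sum_pmf_eq_1)
  ultimately have "(\<Sum>w\<in>UNIV. - d w) = 0" unfolding d_def by (simp add: sum_subtractf)
  moreover have "\<forall>w\<in>UNIV. 0 \<le> - d w" using dM M0 by (auto intro: order_trans)
  ultimately have "\<forall>w\<in>UNIV. - d w = 0" using sum_nonneg_eq_0_iff[of UNIV "\<lambda>w. - d w"] by simp
  then show ?thesis using bnd unfolding d_def by auto
qed



theorem theorem2:
  fixes p q :: "'a::finite pmf"
  shows "P_star p q = 1 \<longleftrightarrow>
    (\<forall>A :: 'a set. (measure_pmf.prob p A)^2 \<le> measure_pmf.prob q A)"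
proof -
  let ?S = "{acc_prob p K | K. valid_rule p q K}"
  have le1: "acc_prob p K \<le> 1" for K unfolding acc_prob_def by simp
  have ne: "valid_rule p q (\<lambda>_ _. q)"
    unfolding valid_rule_def joint_law_def by (simp add: map_bind_pmf pmf.map_comp o_def)
  show ?thesis
  proof
    assume P: "P_star p q = 1"
    show "\<forall>A :: 'a set. (measure_pmf.prob p A)^2 \<le> measure_pmf.prob q A"
    proof (rule ccontr)
      assume "\<not> (\<forall>A :: 'a set. (measure_pmf.prob p A)^2 \<le> measure_pmf.prob q A)"
      then obtain A :: "'a set" where A: "(measure_pmf.prob p A)^2 > measure_pmf.prob q A"
        by (auto simp: not_le)
      have "P_star p q \<le> 1 - (measure_pmf.prob p A)^2 + measure_pmf.prob q A"
        unfolding P_star_def by (rule cSup_least) (use ne upper in auto)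
      then show False using P A by linarith
    qed
  next
    assume "\<forall>A :: 'a set. (measure_pmf.prob p A)^2 \<le> measure_pmf.prob q A"
    then obtain g where bnd: "\<forall>x y. 0 \<le> g x y \<and> g x y \<le> 1" and eq: "\<forall>w. rr p g w = pmf q w"
      using main_exists by blast
    have "valid_rule p q (KK g)"
      unfolding valid_rule_def by (rule pmf_eqI) (simp add: out_KK bnd eq)
    then have "1 \<in> ?S" using acc_KK by force
    then show "P_star p q = 1"
      unfolding P_star_def by (intro cSup_eq_maximum) (auto simp: le1)
  qed
qed

end
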